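(* The useless arc rule is correct: if $\mathcal N_2$ is obtained from a negotiation $\mathcal N_1$ by one application of the useless arc rule, then $\mathcal N_1\equiv\mathcal N_2$.
   Context: Fix a finite nonempty set $A$ of agents; each $a\in A$ has a nonempty set $Q_a$ of internal states, $Q_A=\prod_{a\in A}Q_a$. A transformer is a left-total relation $\tau\subseteq Q_A\times Q_A$; for $S\subseteq A$ an $S$-transformer is a transformer with $(q,q')\in\tau\Rightarrow q_a=q'_a$ for all $a\notin S$. An atom is $n=(P_n,R_n,\delta_n)$: $P_n\subseteq A$ nonempty (parties), $R_n$ finite nonempty (outcomes), $\delta_n$ assigns to each $r\in R_n$ a $P_n$-transformer, written $\langle n,r\rangle$. A negotiation is $\mathcal N=(N,n_0,n_f,\mathcal X)$ with $N$ a finite set of atoms, $n_0,n_f\in N$ (possibly equal), $T(N)=\{(n,a,r): n\in N,a\in P_n,r\in R_n\}$, $\mathcal X:T(N)\to 2^N$, such that every agent is a party of $n_0$ and of $n_f$, and $\mathcal X(n,a,r)=\emptyset$ iff $n=n_f$. A marking is $x:A\to 2^N$; initial $x_0(a)=\{n_0\}$, final $x_f(a)=\emptyset$. $x$ enables $n$ if $n\in x(a)$ for all $a\in P_n$; then for $r\in R_n$ the step $(n,r)$ leads to $x'$ with $x'(a)=\mathcal X(n,a,r)$ for $a\in P_n$ and $x'(a)=x(a)$ otherwise. A large step is a finite occurrence sequence from $x_0$ to $x_f$. $\mathcal N$ is sound if every atom is enabled at some reachable marking and every occurrence sequence from $x_0$ is a large step or can be extended to one. For $r\in R_{n_f}$,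 the summary transformer is $\langle\mathcal N,r\rangle=\bigcup_\sigma \langle n_1,r_1\rangle\cdots\langle n_k,r_k\rangle$, the union over all large steps $\sigma=(n_1,r_1)\cdots(n_k,r_k)$ ending with $(n_f,r)$, with juxtaposition being relational composition. Two negotiations over the same agents are equivalent, $\mathcal N_1\equiv\mathcal N_2$, if either both are unsound, or both are sound, have the same set of final outcomes $R_{n_f}$, and $\langle\mathcal N_1,r\rangle=\langle\mathcal N_2,r\rangle$ for every final outcome $r$. Useless arc rule. Guard: there are $(n,a,r),(n,b,r)\in T(N)$ and two distinct atoms $n',n''\in N$ such that $a,b\in P_{n'}\cap P_{n''}$, $n',n''\in\mathcal X(n,a,r)$ and $\mathcal X(n,b,r)=\{n'\}$. Action: replace $\mathcal X(n,a,r)$ by $\mathcal X(n,a,r)\setminus\{n''\}$ (everything else unchanged). *)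

theory Defs
  imports "HOL-Library.FuncSet"
begin

(* Agents: a finite nonempty set A :: 'a set; internal states Q a :: 'q set.
   Global states Q_A = Pi_E A Q (extensional functions). *)

type_synonym ('a,'q) gstate = "'a \<Rightarrow> 'q"
type_synonym ('a,'q) transformer = "(('a,'q) gstate \<times> ('a,'q) gstate) set"

definition is_transformer :: "'a set \<Rightarrow> ('a \<Rightarrow> 'q set) \<Rightarrow> ('a,'q) transformer \<Rightarrow> bool" where
  "is_transformer A Q \<tau> \<longleftrightarrow>
     \<tau> \<subseteq> (PiE A Q) \<times> (PiE A Q) \<and> (\<forall>q\<in>PiE A Q. \<exists>q'. (q, q') \<in> \<tau>)"

definition S_transformer :: "'a set \<Rightarrow> ('a \<Rightarrow> 'q set) \<Rightarrow> 'a set \<Rightarrow> ('a,'q) transformer \<Rightarrow> bool" where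
  "S_transformer A Q S \<tau> \<longleftrightarrow>
     is_transformer A Q \<tau> \<and> (\<forall>(q, q')\<in>\<tau>. \<forall>a\<in>A - S. q a = q' a)"

record ('a,'q,'n,'r) negotiation =
  atoms   :: "'n set"
  init    :: "'n"
  fin     :: "'n"
  parties :: "'n \<Rightarrow> 'a set"
  outs    :: "'n \<Rightarrow> 'r set"
  delta   :: "'n \<Rightarrow> 'r \<Rightarrow> ('a,'q) transformer"
  arcs    :: "'n \<Rightarrow> 'a \<Rightarrow> 'r \<Rightarrow> 'n set"

definition is_negotiation :: "'a set \<Rightarrow> ('a \<Rightarrow> 'q set) \<Rightarrow> ('a,'q,'n,'r) negotiation \<Rightarrow> bool" where
  "is_negotiation A Q \<N> \<longleftrightarrow>
     finite A \<and> A \<noteq> {} \<and> (\<forall>a\<in>A. Q a \<noteq> {}) \<and>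
     finite (atoms \<N>) \<and> init \<N> \<in> atoms \<N> \<and> fin \<N> \<in> atoms \<N> \<and>
     (\<forall>n\<in>atoms \<N>. parties \<N> n \<subseteq> A \<and> parties \<N> n \<noteq> {} \<and>
        finite (outs \<N> n) \<and> outs \<N> n \<noteq> {} \<and>
        (\<forall>r\<in>outs \<N> n. S_transformer A Q (parties \<N> n) (delta \<N> n r))) \<and>
     parties \<N> (init \<N>) = A \<and> parties \<N> (fin \<N>) = A \<and>
     (\<forall>n\<in>atoms \<N>. \<forall>a\<in>parties \<N> n. \<forall>r\<in>outs \<N> n.
        arcs \<N> n a r \<subseteq> atoms \<N> \<and> (arcs \<N> n a r = {} \<longleftrightarrow> n = fin \<N>))"

type_synonym ('a,'n) marking = "'a \<Rightarrow> 'n set"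

definition init_marking :: "'a set \<Rightarrow> ('a,'q,'n,'r) negotiation \<Rightarrow> ('a,'n) marking" where
  "init_marking A \<N> = (\<lambda>a. if a \<in> A then {init \<N>} else {})"

definition final_marking :: "('a,'n) marking" where
  "final_marking = (\<lambda>a. {})"

definition enabled :: "('a,'q,'n,'r) negotiation \<Rightarrow> ('a,'n) marking \<Rightarrow> 'n \<Rightarrow> bool" where
  "enabled \<N> x n \<longleftrightarrow> n \<in> atoms \<N> \<and> (\<forall>a\<in>parties \<N> n. n \<in> x a)"

fun exec :: "('a,'q,'n,'r) negotiation \<Rightarrow> ('a,'n) marking \<Rightarrow> ('n \<times> 'r) list \<Rightarrow> ('a,'n) marking option" where
  "exec \<N> x [] = Some x"
| "exec \<N> x ((n, r) # \<sigma>) =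
     (if enabled \<N> x n \<and> r \<in> outs \<N> n
      then exec \<N> (\<lambda>a. if a \<in> parties \<N> n then arcs \<N> n a r else x a) \<sigma>
      else None)"

definition large_step :: "'a set \<Rightarrow> ('a,'q,'n,'r) negotiation \<Rightarrow> ('n \<times> 'r) list \<Rightarrow> bool" where
  "large_step A \<N> \<sigma> \<longleftrightarrow> exec \<N> (init_marking A \<N>) \<sigma> = Some final_marking"

definition reachable :: "'a set \<Rightarrow> ('a,'q,'n,'r) negotiation \<Rightarrow> ('a,'n) marking \<Rightarrow> bool" where
  "reachable A \<N> x \<longleftrightarrow> (\<exists>\<sigma>. exec \<N> (init_marking A \<N>) \<sigma> = Some x)"

definition sound :: "'a set \<Rightarrow> ('a,'q,'n,'r) negotiation \<Rightarrow> bool" where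
  "sound A \<N> \<longleftrightarrow>
     (\<forall>n\<in>atoms \<N>. \<exists>x. reachable A \<N> x \<and> enabled \<N> x n) \<and>
     (\<forall>\<sigma> x. exec \<N> (init_marking A \<N>) \<sigma> = Some x \<longrightarrow>
        (\<exists>\<sigma>'. large_step A \<N> (\<sigma> @ \<sigma>')))"

definition seq_transformer :: "('a,'q,'n,'r) negotiation \<Rightarrow> ('n \<times> 'r) list \<Rightarrow> ('a,'q) transformer" where
  "seq_transformer \<N> \<sigma> = foldr (\<lambda>(n, r) acc. delta \<N> n r O acc) \<sigma> Id"

definition summary :: "'a set \<Rightarrow> ('a,'q,'n,'r) negotiation \<Rightarrow> 'r \<Rightarrow> ('a,'q) transformer" where
  "summary A \<N> r =
     (\<Union>\<sigma>\<in>{\<sigma>. large_step A \<N> \<sigma> \<and> \<sigma> \<noteq> [] \<and> last \<sigma> = (fin \<N>, r)}. seq_transformer \<N> \<sigma>)"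

definition neg_equiv :: "'a set \<Rightarrow> ('a,'q,'n,'r) negotiation \<Rightarrow> ('a,'q,'n,'r) negotiation \<Rightarrow> bool" where
  "neg_equiv A \<N>1 \<N>2 \<longleftrightarrow>
     (\<not> sound A \<N>1 \<and> \<not> sound A \<N>2) \<or>
     (sound A \<N>1 \<and> sound A \<N>2 \<and> outs \<N>1 (fin \<N>1) = outs \<N>2 (fin \<N>2) \<and>
      (\<forall>r\<in>outs \<N>1 (fin \<N>1). summary A \<N>1 r = summary A \<N>2 r))"

definition useless_arc_step :: "('a,'q,'n,'r) negotiation \<Rightarrow> ('a,'q,'n,'r) negotiation \<Rightarrow> bool" where
  "useless_arc_step \<N>1 \<N>2 \<longleftrightarrow>
     (\<exists>n a b r n' n''.
        n \<in> atoms \<N>1 \<and> r \<in> outs \<N>1 n \<and> a \<in> parties \<N>1 n \<and> b \<in> parties \<N>1 n \<and>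
        n' \<in> atoms \<N>1 \<and> n'' \<in> atoms \<N>1 \<and> n' \<noteq> n'' \<and>
        a \<in> parties \<N>1 n' \<inter> parties \<N>1 n'' \<and> b \<in> parties \<N>1 n' \<inter> parties \<N>1 n'' \<and>
        n' \<in> arcs \<N>1 n a r \<and> n'' \<in> arcs \<N>1 n a r \<and> arcs \<N>1 n b r = {n'} \<and>
        \<N>2 = \<N>1\<lparr>arcs := (\<lambda>m c s. if (m, c, s) = (n, a, r)
                                  then arcs \<N>1 n a r - {n''} else arcs \<N>1 m c s)\<rparr>)"

end

theory Submission
  imports Defs
begin

locale ua =
  fixes N1 :: "('a,'q,'n,'r) negotiation" and n a b r n' n''
  assumes ab: "a \<in> parties N1 n" "b \<in> parties N1 n"
    and nn: "n' \<noteq> n''"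
    and pa: "a \<in> parties N1 n'" "b \<in> parties N1 n''"
    and arc: "n'' \<in> arcs N1 n a r" "arcs N1 n b r = {n'}"
begin

definition N2 where "N2 = N1\<lparr>arcs := (\<lambda>m c s. if (m, c, s) = (n, a, r)
                                  then arcs N1 n a r - {n''} else arcs N1 m c s)\<rparr>"

lemma anb: "a \<noteq> b" using arc nn by auto

definition R where "R x1 x2 \<longleftrightarrow> x1 = x2 \<or> (x1 = x2(a := insert n'' (x2 a)) \<and> x2 b = {n'})"

lemma en: "R x1 x2 \<Longrightarrow> enabled N2 x2 m = enabled N1 x1 m"
proof -
  assume h: "R x1 x2"
  have e: "enabled N2 x2 m = enabled N1 x2 m" by (simp add: N2_def enabled_def)
  show ?thesis
  proof (cases "x1 = x2")
    case True then show ?thesis using e by simp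
  next
    case False
    then have d: "x1 = x2(a := insert n'' (x2 a))" "x2 b = {n'}" using h R_def by auto
    show ?thesis
    proof (cases "m = n''")
      case True
      then show ?thesis using e d pa nn anb unfolding enabled_def by auto
    next
      case False
      then have "\<forall>c. (m \<in> x1 c) = (m \<in> x2 c)" using d by auto
      then show ?thesis using e unfolding enabled_def by auto
    qed
  qed
qed

lemma stp:
  assumes h: "R x1 x2" and en: "enabled N1 x1 m"
  shows "R (\<lambda>c. if c \<in> parties N1 m then arcs N1 m c s else x1 c)
           (\<lambda>c. if c \<in> parties N2 m then arcs N2 m c s else x2 c)"
    (is "R ?y1 ?y2")
proof -
  have P: "parties N2 = parties N1" by (simp add: N2_def)
  have oth: "\<And>c. c \<noteq> a \<Longrightarrow> x1 c = x2 c" using h by (auto simp: R_def)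
  show ?thesis
  proof (cases "(m, s) = (n, r)")
    case True
    then have ms: "m = n" "s = r" by auto
    have A1: "\<And>c. c \<noteq> a \<Longrightarrow> arcs N2 n c r = arcs N1 n c r" by (simp add: N2_def)
    have A0: "arcs N2 n a r = arcs N1 n a r - {n''}" by (simp add: N2_def)
    have e1: "?y1 c = (?y2(a := insert n'' (?y2 a))) c" for c
    proof (cases "c = a")
      case True
      then show ?thesis using ab arc(1) by (simp add: ms P A0 insert_absorb)
    next
      case False
      then show ?thesis using oth[OF False] A1[OF False] by (simp add: ms P)
    qed
    have "?y2 b = {n'}" using ab arc anb A1[of b] by (simp add: ms P)
    moreover have "?y1 = ?y2(a := insert n'' (?y2 a))" by (rule ext) (rule e1)
    ultimately show ?thesis unfolding R_def by (intro disjI2 conjI)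
  next
    case ne: False
    have A2: "\<And>c. arcs N2 m c s = arcs N1 m c s" using ne by (auto simp: N2_def)
    show ?thesis
    proof (cases "x1 = x2")
      case True
      have "?y1 = ?y2" unfolding True P A2 by (rule refl)
      then show ?thesis by (simp add: R_def)
    next
      case False
      then have d: "x1 = x2(a := insert n'' (x2 a))" "x2 b = {n'}" using h R_def by auto
      show ?thesis
      proof (cases "a \<in> parties N1 m")
        case True
        then have "?y1 = ?y2" using d by (auto simp: P A2 fun_eq_iff)
        then show ?thesis by (simp add: R_def)
      next
        case aF: False
        have "b \<notin> parties N1 m"
        proof
          assume "b \<in> parties N1 m"
          then have "m \<in> x1 b" using en unfolding enabled_def by blast
          then have "m = n'" using d anb by auto
          then show False using aF pa by simp
        qed
        then have "?y1 = ?y2(a := insert n'' (?y2 a)) \<and> ?y2 b = {n'}"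
          using aF d anb by (auto simp: P A2 fun_eq_iff)
        then show ?thesis by (simp add: R_def)
      qed
    qed
  qed
qed

lemma ex: "R x1 x2 \<Longrightarrow> (exec N1 x1 \<sigma> = None \<longleftrightarrow> exec N2 x2 \<sigma> = None) \<and>
   (\<forall>y1 y2. exec N1 x1 \<sigma> = Some y1 \<longrightarrow> exec N2 x2 \<sigma> = Some y2 \<longrightarrow> R y1 y2)"
proof (induction \<sigma> arbitrary: x1 x2)
  case Nil then show ?case by simp
next
  case (Cons p \<sigma>)
  obtain m s where p: "p = (m, s)" by fastforce
  have O: "outs N2 = outs N1" by (simp add: N2_def)
  show ?case
  proof (cases "enabled N1 x1 m \<and> s \<in> outs N1 m")
    case True
    have e2: "enabled N2 x2 m \<and> s \<in> outs N2 m" using True en[OF Cons.prems, of m] O by simp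
    have q1: "exec N1 x1 (p # \<sigma>) = exec N1 (\<lambda>c. if c \<in> parties N1 m then arcs N1 m c s else x1 c) \<sigma>"
      using True by (simp add: p)
    have q2: "exec N2 x2 (p # \<sigma>) = exec N2 (\<lambda>c. if c \<in> parties N2 m then arcs N2 m c s else x2 c) \<sigma>"
      using e2 by (simp add: p)
    show ?thesis unfolding q1 q2 using Cons.IH[OF stp[OF Cons.prems, of m s]] True by blast
  next
    case False
    have q1: "exec N1 x1 (p # \<sigma>) = None" unfolding p exec.simps using False by (rule if_not_P)
    have nf: "\<not> (enabled N2 x2 m \<and> s \<in> outs N2 m)" using False en[OF Cons.prems, of m] O by simp
    have q2: "exec N2 x2 (p # \<sigma>) = None" unfolding p exec.simps using nf by (rule if_not_P)
    show ?thesis unfolding q1 q2 by simp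
  qed
qed

lemma exs: "(exec N1 (init_marking A N1) \<sigma> = None \<longleftrightarrow> exec N2 (init_marking A N2) \<sigma> = None) \<and>
   (\<forall>y1 y2. exec N1 (init_marking A N1) \<sigma> = Some y1 \<longrightarrow> exec N2 (init_marking A N2) \<sigma> = Some y2 \<longrightarrow> R y1 y2)"
proof -
  have "init N2 = init N1" by (simp add: N2_def)
  then have "init_marking A N2 = init_marking A N1" unfolding init_marking_def by (simp only:)
  then show ?thesis using ex[of "init_marking A N1" "init_marking A N1"] by (simp add: R_def)
qed

lemma fin_R: assumes "R y1 y2" shows "(y1 = final_marking \<longleftrightarrow> y2 = final_marking)"
proof (cases "y1 = y2")
  case False
  then have "y1 a \<noteq> {}" "y2 b \<noteq> {}" using assms unfolding R_def by auto
  then show ?thesis unfolding final_marking_def by auto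
qed simp

lemma ls: "large_step A N2 \<sigma> = large_step A N1 \<sigma>"
proof -
  have e: "exec N1 (init_marking A N1) \<sigma> = None \<longleftrightarrow> exec N2 (init_marking A N2) \<sigma> = None"
    using exs by blast
  show ?thesis
  proof (cases "exec N1 (init_marking A N1) \<sigma>")
    case None then show ?thesis using e by (simp add: large_step_def)
  next
    case (Some y1)
    then obtain y2 where y2: "exec N2 (init_marking A N2) \<sigma> = Some y2" using e by auto
    have Ry: "R y1 y2" using Some y2 exs[of A \<sigma>] by blast
    show ?thesis using fin_R[OF Ry] Some y2 by (simp add: large_step_def)
  qed
qed

lemma snd_eq: "sound A N2 = sound A N1"
proof -
  have at: "atoms N2 = atoms N1" by (simp add: N2_def)
  have r: "(\<exists>x. reachable A N2 x \<and> enabled N2 x m) = (\<exists>x. reachable A N1 x \<and> enabled N1 x m)" for m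
  proof
    assume "\<exists>x. reachable A N2 x \<and> enabled N2 x m"
    then obtain x \<sigma> where x: "exec N2 (init_marking A N2) \<sigma> = Some x" "enabled N2 x m"
      by (auto simp: reachable_def)
    then obtain y where y: "exec N1 (init_marking A N1) \<sigma> = Some y" using exs[of A \<sigma>] by auto
    then have "R y x" using x exs[of A \<sigma>] by auto
    then have "enabled N1 y m" using x(2) en by blast
    then show "\<exists>x. reachable A N1 x \<and> enabled N1 x m" using y unfolding reachable_def by blast
  next
    assume "\<exists>x. reachable A N1 x \<and> enabled N1 x m"
    then obtain x \<sigma> where x: "exec N1 (init_marking A N1) \<sigma> = Some x" "enabled N1 x m"
      by (auto simp: reachable_def)
    then obtain y where y: "exec N2 (init_marking A N2) \<sigma> = Some y" using exs[of A \<sigma>] by auto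
    then have "R x y" using x exs[of A \<sigma>] by auto
    then have "enabled N2 y m" using x(2) en by blast
    then show "\<exists>x. reachable A N2 x \<and> enabled N2 x m" using y unfolding reachable_def by blast
  qed
  have s: "(\<forall>\<sigma> x. exec N2 (init_marking A N2) \<sigma> = Some x \<longrightarrow> (\<exists>\<sigma>'. large_step A N2 (\<sigma> @ \<sigma>'))) =
      (\<forall>\<sigma> x. exec N1 (init_marking A N1) \<sigma> = Some x \<longrightarrow> (\<exists>\<sigma>'. large_step A N1 (\<sigma> @ \<sigma>')))"
  proof -
    have "(\<exists>x. exec N2 (init_marking A N2) \<sigma> = Some x) = (\<exists>x. exec N1 (init_marking A N1) \<sigma> = Some x)" for \<sigma>
      using exs[of A \<sigma>] by (metis option.exhaust option.distinct(1))
    then show ?thesis unfolding ls by blast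
  qed
  show ?thesis unfolding sound_def using at r s by simp
qed

lemma summ: "summary A N2 s = summary A N1 s"
proof -
  have "seq_transformer N2 \<sigma> = seq_transformer N1 \<sigma>" for \<sigma>
    by (simp add: N2_def seq_transformer_def)
  moreover have "fin N2 = fin N1" by (simp add: N2_def)
  ultimately show ?thesis by (simp add: summary_def ls)
qed

lemma equiv: "neg_equiv A N1 N2"
proof -
  have o: "outs N2 (fin N2) = outs N1 (fin N1)" by (simp add: N2_def)
  show ?thesis unfolding neg_equiv_def snd_eq summ o by blast
qed

end

theorem theorem3:
  fixes A :: "'a set" and Q :: "'a \<Rightarrow> 'q set"
    and \<N>1 \<N>2 :: "('a,'q,'n,'r) negotiation"
  assumes "is_negotiation A Q \<N>1"
    and "useless_arc_step \<N>1 \<N>2"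
  shows "neg_equiv A \<N>1 \<N>2"
proof -
  have ex6: "\<exists>n a b r n' n''.
        n \<in> atoms \<N>1 \<and> r \<in> outs \<N>1 n \<and> a \<in> parties \<N>1 n \<and> b \<in> parties \<N>1 n \<and>
        n' \<in> atoms \<N>1 \<and> n'' \<in> atoms \<N>1 \<and> n' \<noteq> n'' \<and>
        a \<in> parties \<N>1 n' \<inter> parties \<N>1 n'' \<and> b \<in> parties \<N>1 n' \<inter> parties \<N>1 n'' \<and>
        n' \<in> arcs \<N>1 n a r \<and> n'' \<in> arcs \<N>1 n a r \<and> arcs \<N>1 n b r = {n'} \<and>
        \<N>2 = \<N>1\<lparr>arcs := (\<lambda>m c s. if (m, c, s) = (n, a, r)
                                  then arcs \<N>1 n a r - {n''} else arcs \<N>1 m c s)\<rparr>"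
    using assms(2) unfolding useless_arc_step_def .
  then obtain n a b r n' n'' where h:
        "n \<in> atoms \<N>1 \<and> r \<in> outs \<N>1 n \<and> a \<in> parties \<N>1 n \<and> b \<in> parties \<N>1 n \<and>
        n' \<in> atoms \<N>1 \<and> n'' \<in> atoms \<N>1 \<and> n' \<noteq> n'' \<and>
        a \<in> parties \<N>1 n' \<inter> parties \<N>1 n'' \<and> b \<in> parties \<N>1 n' \<inter> parties \<N>1 n'' \<and>
        n' \<in> arcs \<N>1 n a r \<and> n'' \<in> arcs \<N>1 n a r \<and> arcs \<N>1 n b r = {n'} \<and>
        \<N>2 = \<N>1\<lparr>arcs := (\<lambda>m c s. if (m, c, s) = (n, a, r)
                                  then arcs \<N>1 n a r - {n''} else arcs \<N>1 m c s)\<rparr>"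
    by (elim exE) (rule that)
  have l: "ua \<N>1 n a b r n' n''"
  proof
    show "a \<in> parties \<N>1 n" using h by (elim conjE) assumption
    show "b \<in> parties \<N>1 n" using h by (elim conjE) assumption
    show "n' \<noteq> n''" using h by (elim conjE) assumption
    show "a \<in> parties \<N>1 n'" using h by (elim conjE IntE) assumption
    show "b \<in> parties \<N>1 n''" using h by (elim conjE IntE) assumption
    show "n'' \<in> arcs \<N>1 n a r" using h by (elim conjE) assumption
    show "arcs \<N>1 n b r = {n'}" using h by (elim conjE) assumption
  qed
  have e: "\<N>2 = \<N>1\<lparr>arcs := (\<lambda>m c s. if (m, c, s) = (n, a, r)
                                  then arcs \<N>1 n a r - {n''} else arcs \<N>1 m c s)\<rparr>"
    using h by (elim conjE) assumption
  have "\<N>2 = ua.N2 \<N>1 n a r n''" unfolding e ua.N2_def[OF l] by (rule refl)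
  then show ?thesis using ua.equiv[OF l] by (simp only:)
qed

end
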